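(* Let $X=[0,1]^d$, let $Y$ be a convex subset of a finite-dimensional normed space, let $\mathcal{M}\subset X$ be a compact smooth $m$-dimensional embedded manifold, and let $\rho$ be a probability density on $\mathcal{M}$ with $\inf_{\mathcal{M}}\rho>0$. Let $y:X\to Y$ be the label function and $\ell:Y\times Y\to\mathbb{R}$ a loss with $\ell(y_1,y_2)\ge0$, equality iff $y_1=y_2$, which is strictly convex in its first argument. Fix $\lambda>0$ and let $J[u]=\int_{\mathcal{M}}\ell(u(x),y(x))\rho\,dVol(x)+\lambda\,\mathrm{Lip}(u)$. If $u,v\in W^{1,\infty}(X;Y)$ are two minimizers of $J$, then $u=v$ on $\mathcal{M}$.
   Context: $W^{1,\infty}(X;Y)$ is the space of Lipschitz maps $X\to Y$; $\mathrm{Lip}(u)$ is the Lipschitz constant of $u$. *)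

theory Defs
  imports "HOL-Analysis.Analysis"
begin

fun Ck_on :: "nat \<Rightarrow> 'a::real_normed_vector set \<Rightarrow> ('a \<Rightarrow> 'c::real_normed_vector) \<Rightarrow> bool" where
  "Ck_on 0 U f = continuous_on U f"
| "Ck_on (Suc k) U f = (f differentiable_on U \<and>
      (\<forall>v. Ck_on k U (\<lambda>x. frechet_derivative f (at x) v)))"

definition smooth_on :: "'a::real_normed_vector set \<Rightarrow> ('a \<Rightarrow> 'c::real_normed_vector) \<Rightarrow> bool" where
  "smooth_on U f \<longleftrightarrow> (\<forall>k. Ck_on k U f)"

definition embedded_submanifold :: "nat \<Rightarrow> 'a::euclidean_space set \<Rightarrow> bool" where
  "embedded_submanifold m M \<longleftrightarrow> m \<le> DIM('a) \<and>
     (\<forall>p\<in>M. \<exists>U V (\<phi>::'a\<Rightarrow>'a) \<psi> L. open U \<and> p \<in> U \<and> open V \<and>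
        smooth_on U \<phi> \<and> smooth_on V \<psi> \<and> \<phi> ` U = V \<and>
        (\<forall>x\<in>U. \<psi> (\<phi> x) = x) \<and> (\<forall>z\<in>V. \<phi> (\<psi> z) = z) \<and>
        subspace L \<and> dim L = m \<and> \<phi> ` (M \<inter> U) = V \<inter> L)"

section \<open>m-dimensional Hausdorff measure (= Riemannian volume on an m-dim submanifold)\<close>

definition hcontent :: "nat \<Rightarrow> 'a::metric_space set \<Rightarrow> real" where
  "hcontent m S = (if S = {} then 0 else unit_ball_vol (real m) * (diameter S / 2) ^ m)"

definition hausdorff_delta :: "nat \<Rightarrow> real \<Rightarrow> 'a::metric_space set \<Rightarrow> ennreal" where
  "hausdorff_delta m \<delta> A =
     (INF C \<in> {C :: nat \<Rightarrow> 'a set. A \<subseteq> (\<Union>i. C i) \<and> (\<forall>i. bounded (C i) \<and> diameter (C i) \<le> \<delta>)}.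
        (\<Sum>i. ennreal (hcontent m (C i))))"

definition hausdorff_measure :: "nat \<Rightarrow> 'a::metric_space set \<Rightarrow> ennreal" where
  "hausdorff_measure m A = (SUP \<delta> \<in> {0<..}. hausdorff_delta m \<delta> A)"

definition Vol :: "nat \<Rightarrow> 'a::euclidean_space set \<Rightarrow> 'a measure" where
  "Vol m M = measure_of M {M \<inter> B | B. B \<in> sets borel} (hausdorff_measure m)"

definition Lip :: "'a::metric_space set \<Rightarrow> ('a \<Rightarrow> 'b::metric_space) \<Rightarrow> real" where
  "Lip X u = Inf {C. C-lipschitz_on X u}"

definition W1inf :: "'a::metric_space set \<Rightarrow> 'b::metric_space set \<Rightarrow> ('a \<Rightarrow> 'b) set" where
  "W1inf X Y = {u. u ` X \<subseteq> Y \<and> (\<exists>C. C-lipschitz_on X u)}"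

definition strictly_convex_on :: "'b::real_vector set \<Rightarrow> ('b \<Rightarrow> real) \<Rightarrow> bool" where
  "strictly_convex_on Y f \<longleftrightarrow> (\<forall>a\<in>Y. \<forall>b\<in>Y. \<forall>t::real. a \<noteq> b \<and> 0 < t \<and> t < 1 \<longrightarrow>
      f ((1 - t) *\<^sub>R a + t *\<^sub>R b) < (1 - t) * f a + t * f b)"

definition Jfun :: "'a measure \<Rightarrow> ('b \<Rightarrow> 'b \<Rightarrow> real) \<Rightarrow> ('a \<Rightarrow> 'b) \<Rightarrow> ('a \<Rightarrow> real) \<Rightarrow> real
                    \<Rightarrow> 'a::metric_space set \<Rightarrow> ('a \<Rightarrow> 'b::metric_space) \<Rightarrow> ennreal" where
  "Jfun \<mu> loss y \<rho> lam X u = (\<integral>\<^sup>+ x. ennreal (loss (u x) (y x) * \<rho> x) \<partial>\<mu>) + ennreal (lam * Lip X u)"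

definition is_minimizer :: "('a \<Rightarrow> 'b) set \<Rightarrow> (('a \<Rightarrow> 'b) \<Rightarrow> ennreal) \<Rightarrow> ('a \<Rightarrow> 'b) \<Rightarrow> bool" where
  "is_minimizer W J u \<longleftrightarrow> u \<in> W \<and> J u < \<infinity> \<and> (\<forall>w\<in>W. J u \<le> J w)"

end

theory Submission
  imports Defs
begin

lemma box_measure:
  fixes m :: nat
  assumes "\<And>j. j < m \<Longrightarrow> a j \<le> b j"
  shows "emeasure (PiM {..<m} (\<lambda>_. lborel)) (PiE {..<m} (\<lambda>j. {a j..b j})) = ennreal (\<Prod>j<m. b j - a j)"
proof -
  interpret product_sigma_finite "\<lambda>_. lborel" by standard
  have "emeasure (PiM {..<m} (\<lambda>_. lborel)) (PiE {..<m} (\<lambda>j. {a j..b j})) = (\<Prod>j<m. emeasure lborel {a j..b j})"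
    by (rule emeasure_PiM) auto
  also have "\<dots> = (\<Prod>j<m. ennreal (b j - a j))"
    using assms by (intro prod.cong) auto
  also have "\<dots> = ennreal (\<Prod>j<m. b j - a j)"
    using assms by (intro prod_ennreal) auto
  finally show ?thesis .
qed

lemma box_sets: "PiE {..<(m::nat)} (\<lambda>j. {a j..b j::real}) \<in> sets (PiM {..<m} (\<lambda>_. lborel))"
  by (rule sets_PiM_I_finite) auto

lemma hd_pos:
  fixes T A :: "'a::metric_space set" and G :: "'a \<Rightarrow> nat \<Rightarrow> real" and m :: nat
  assumes TA: "T \<subseteq> A" and K: "K > 0"
    and Glip: "\<And>a b j. a\<in>T \<Longrightarrow> b\<in>T \<Longrightarrow> j<m \<Longrightarrow> \<bar>G a j - G b j\<bar> \<le> K * dist a b"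
    and Q: "PiE {..<m} (\<lambda>j. {l j..h j}) \<subseteq> G ` T" and lh: "\<And>j. j<m \<Longrightarrow> l j < h j"
  shows "hausdorff_measure m A > 0"
proof -
  define P where "P = PiM {..<m} (\<lambda>_. lborel::real measure)"
  define qr where "qr = (\<Prod>j<m. h j - l j)"
  define ub where "ub = unit_ball_vol (real m)"
  have ub: "ub > 0" unfolding ub_def by simp
  define cr where "cr = (4*K)^m / ub"
  have qr: "qr > 0" unfolding qr_def using lh by (intro prod_pos) auto
  have cr: "cr > 0" unfolding cr_def using K ub by simp
  have key: "ennreal qr \<le> ennreal cr * (\<Sum>i. ennreal (hcontent m (C i)))"
    if cov: "A \<subseteq> (\<Union>i. C i)" and bd: "\<And>i. bounded (C i)" for C :: "nat \<Rightarrow> 'a set"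
  proof -
    define p where "p i = (SOME p. p \<in> C i \<inter> T)" for i
    define d where "d i = diameter (C i)" for i
    define box where "box i = (if C i \<inter> T = {} then {} else
        PiE {..<m} (\<lambda>j. {G (p i) j - K * d i .. G (p i) j + K * d i}))" for i
    have p: "p i \<in> C i \<inter> T" if "C i \<inter> T \<noteq> {}" for i
      unfolding p_def using that by (metis (no_types, lifting) ex_in_conv someI_ex)
    have d0: "d i \<ge> 0" for i unfolding d_def using bd by (rule diameter_ge_0)
    have bs: "box i \<in> sets P" for i unfolding box_def P_def using box_sets by auto
    have sub: "PiE {..<m} (\<lambda>j. {l j..h j}) \<subseteq> (\<Union>i. box i)"
    proof
      fix q assume q: "q \<in> PiE {..<m} (\<lambda>j. {l j..h j})"
      then obtain t where t: "t \<in> T" "q = G t" using Q by blast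
      then obtain i where i: "t \<in> C i" using cov TA by blast
      then have ne: "C i \<inter> T \<noteq> {}" using t by blast
      have "q \<in> box i"
      proof -
        have "\<bar>G t j - G (p i) j\<bar> \<le> K * d i" if "j < m" for j
        proof -
          have "\<bar>G t j - G (p i) j\<bar> \<le> K * dist t (p i)" using Glip t p[OF ne] that by blast
          also have "\<dots> \<le> K * d i" unfolding d_def using K i p[OF ne] bd
            by (intro mult_left_mono diameter_bounded_bound) auto
          finally show ?thesis .
        qed
        then have "\<forall>j<m. G t j \<in> {G (p i) j - K * d i .. G (p i) j + K * d i}"
          by (auto simp: abs_le_iff) (smt (verit))+
        then show ?thesis using q ne unfolding box_def t(2) by (auto simp: PiE_iff)
      qed
      then show "q \<in> (\<Union>i. box i)" by blast
    qed
    have "ennreal qr = emeasure P (PiE {..<m} (\<lambda>j. {l j..h j}))"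
      unfolding P_def qr_def using lh by (subst box_measure) (auto intro: less_imp_le)
    also have "\<dots> \<le> emeasure P (\<Union>i. box i)"
      using sub bs by (intro emeasure_mono) auto
    also have "\<dots> \<le> (\<Sum>i. emeasure P (box i))"
      using bs by (intro emeasure_subadditive_countably) auto
    also have "\<dots> \<le> (\<Sum>i. ennreal cr * ennreal (hcontent m (C i)))"
    proof (intro suminf_le summableI)
      fix i
      show "emeasure P (box i) \<le> ennreal cr * ennreal (hcontent m (C i))"
      proof (cases "C i \<inter> T = {}")
        case True then show ?thesis unfolding box_def by simp
      next
        case False
        then have ne: "C i \<noteq> {}" by blast
        have "emeasure P (box i) = ennreal (\<Prod>j<m. (G (p i) j + K * d i) - (G (p i) j - K * d i))"
          unfolding P_def box_def using False K d0 by (simp, subst box_measure) auto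
        also have "\<dots> = ennreal ((2*K*d i)^m)" by (simp add: power_mult_distrib mult.assoc)
        also have "(2*K*d i)^m = cr * hcontent m (C i)"
        proof -
          have "(2*K*d i)^m = ((4*K) * (d i/2))^m" by (rule arg_cong[where f="\<lambda>x. x^m"]) simp
          also have "\<dots> = (4*K)^m * (d i/2)^m" by (rule power_mult_distrib)
          also have "\<dots> = cr * (ub * (d i/2)^m)" unfolding cr_def using ub by simp
          finally show ?thesis using ne unfolding hcontent_def ub_def d_def by simp
        qed
        also have "ennreal (cr * hcontent m (C i)) = ennreal cr * ennreal (hcontent m (C i))"
          using cr by (simp add: ennreal_mult')
        finally show ?thesis by simp
      qed
    qed
    also have "\<dots> = ennreal cr * (\<Sum>i. ennreal (hcontent m (C i)))" by simp
    finally show ?thesis .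
  qed
  have key2: "ennreal (qr/cr) \<le> (\<Sum>i. ennreal (hcontent m (C i)))"
    if "A \<subseteq> (\<Union>i. C i)" "\<And>i. bounded (C i)" for C :: "nat \<Rightarrow> 'a set"
  proof -
    have "ennreal (qr/cr) = ennreal (1/cr) * ennreal qr" using cr qr by (simp add: ennreal_mult[symmetric])
    also have "\<dots> \<le> ennreal (1/cr) * (ennreal cr * (\<Sum>i. ennreal (hcontent m (C i))))"
      by (intro mult_left_mono key that) auto
    also have "\<dots> = (\<Sum>i. ennreal (hcontent m (C i)))"
      using cr by (simp add: mult.assoc[symmetric] ennreal_mult[symmetric])
    finally show ?thesis .
  qed
  have "ennreal (qr/cr) \<le> hausdorff_delta m 1 A"
    unfolding hausdorff_delta_def using key2 by (auto intro!: INF_greatest)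
  also have "\<dots> \<le> hausdorff_measure m A"
    unfolding hausdorff_measure_def by (rule SUP_upper) auto
  finally show ?thesis using qr cr by (metis divide_pos_pos ennreal_eq_0_iff not_le order.strict_trans1 pos2 zero_less_iff_neq_zero)
qed

lemma linear_norm_bound:
  fixes D :: "'a::euclidean_space \<Rightarrow> 'b::real_normed_vector"
  assumes "linear D"
  shows "norm (D h) \<le> (\<Sum>j\<in>Basis. norm (D j)) * norm h"
proof -
  have "D h = D (\<Sum>j\<in>Basis. (h \<bullet> j) *\<^sub>R j)" by (simp add: euclidean_representation)
  also have "\<dots> = (\<Sum>j\<in>Basis. (h \<bullet> j) *\<^sub>R D j)"
    using assms by (simp add: linear_sum linear_scale)
  finally have "norm (D h) \<le> (\<Sum>j\<in>Basis. norm ((h \<bullet> j) *\<^sub>R D j))"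
    by (metis norm_sum)
  also have "\<dots> \<le> (\<Sum>j\<in>Basis. norm h * norm (D j))"
    by (intro sum_mono) (auto intro: mult_right_mono Basis_le_norm)
  finally show ?thesis by (simp add: sum_distrib_left mult.commute)
qed

lemma C1_local_lipschitz:
  fixes f :: "'a::euclidean_space \<Rightarrow> 'b::real_normed_vector"
  assumes C1: "Ck_on (Suc 0) U f" and U: "open U" and x0: "x0 \<in> U"
  obtains e K where "e > 0" "K > 0" "cball x0 e \<subseteq> U"
    "\<And>x y. x \<in> cball x0 e \<Longrightarrow> y \<in> cball x0 e \<Longrightarrow> dist (f x) (f y) \<le> K * dist x y"
proof -
  obtain e where e: "e > 0" "cball x0 e \<subseteq> U" using U x0 open_contains_cball by blast
  define D where "D x = frechet_derivative f (at x)" for x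
  have diff: "f differentiable_on U" and cont: "\<And>v. continuous_on U (\<lambda>x. D x v)"
    using C1 by (auto simp: D_def)
  have hasd: "(f has_derivative D x) (at x)" if "x \<in> U" for x
    using diff that U unfolding D_def
    by (simp add: differentiable_on_eq_differentiable_at frechet_derivative_works[symmetric])
  define Bf where "Bf x = (\<Sum>j\<in>Basis. norm (D x j))" for x
  have "continuous_on (cball x0 e) Bf"
    unfolding Bf_def using cont e(2)
    by (intro continuous_intros) (auto intro: continuous_on_subset)
  then have "compact (Bf ` cball x0 e)" by (intro compact_continuous_image) auto
  moreover have "Bf ` cball x0 e \<noteq> {}" using e by auto
  ultimately obtain s where "s \<in> Bf ` cball x0 e" "\<forall>t\<in>Bf ` cball x0 e. t \<le> s"
    using compact_attains_sup by blast
  then obtain z where z: "z \<in> cball x0 e" "\<And>x. x \<in> cball x0 e \<Longrightarrow> Bf x \<le> Bf z"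
    by auto
  define K where "K = max (Bf z) 1"
  have K: "K > 0" unfolding K_def by simp
  have "dist (f x) (f y) \<le> K * dist x y" if "x \<in> cball x0 e" "y \<in> cball x0 e" for x y
  proof -
    have "norm (f x - f y) \<le> K * norm (x - y)"
    proof (rule differentiable_bound[where f'=D])
      show "convex (cball x0 e)" by simp
      show "(f has_derivative D x) (at x within cball x0 e)" if "x \<in> cball x0 e" for x
        using hasd[of x] that e(2) by (meson has_derivative_at_withinI subsetD)
      show "onorm (D x) \<le> K" if "x \<in> cball x0 e" for x
      proof (rule onorm_le)
        fix h
        have lin: "linear (D x)" using hasd[of x] that e(2)
          by (auto dest!: has_derivative_bounded_linear bounded_linear.linear)
        have "norm (D x h) \<le> Bf x * norm h" unfolding Bf_def by (rule linear_norm_bound[OF lin])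
        also have "\<dots> \<le> K * norm h" using z(2)[OF that] unfolding K_def
          by (intro mult_right_mono) auto
        finally show "norm (D x h) \<le> K * norm h" .
      qed
    qed (use that in auto)
    then show ?thesis by (simp add: dist_norm)
  qed
  then show ?thesis using that e K by blast
qed

lemma orth_frame:
  fixes L :: "'a::euclidean_space set"
  assumes "subspace L" "dim L = m"
  obtains b where "\<And>i. i<m \<Longrightarrow> b i \<in> L"
    "\<And>i k. i<m \<Longrightarrow> k<m \<Longrightarrow> b i \<bullet> b k = (if i = k then 1 else 0)"
proof -
  obtain B where B: "B \<subseteq> L" "pairwise orthogonal B" "\<And>x. x \<in> B \<Longrightarrow> norm x = 1"
    "independent B" "card B = dim L"
    using orthonormal_basis_subspace[OF assms(1)] by metis
  have "finite B" using B(4) by (rule finiteI_independent)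
  then obtain b where bb: "bij_betw b {0..<card B} B" using ex_bij_betw_nat_finite by blast
  then have bi: "bij_betw b {..<m} B" using B(5) assms(2) by (simp add: lessThan_atLeast0)
  have 1: "b i \<in> L" if "i < m" for i using bi B(1) that by (auto dest: bij_betw_apply)
  have 2: "b i \<bullet> b k = (if i = k then 1 else 0)" if "i<m" "k<m" for i k
  proof (cases "i = k")
    case True
    have "norm (b i) = 1" using B(3) bi that by (auto dest: bij_betw_apply)
    then show ?thesis using True by (simp add: dot_square_norm)
  next
    case False
    then have "b i \<noteq> b k" using bi that unfolding bij_betw_def inj_on_def by auto
    moreover have "b i \<in> B" "b k \<in> B" using bi that by (auto dest: bij_betw_apply)
    ultimately show ?thesis using B(2) False by (auto simp: pairwise_def orthogonal_def)
  qed
  show ?thesis using that 1 2 by blast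
qed

lemma manifold_pos:
  fixes M :: "'a::euclidean_space set"
  assumes mf: "embedded_submanifold m M" and x0: "x0 \<in> M" and r: "r > 0"
  shows "hausdorff_measure m (M \<inter> ball x0 r) > 0"
proof -
  obtain U V and \<phi> :: "'a \<Rightarrow> 'a" and \<psi> L where ch: "open U" "x0 \<in> U" "open V" "smooth_on U \<phi>" "smooth_on V \<psi>" "\<phi> ` U = V"
     "\<forall>x\<in>U. \<psi> (\<phi> x) = x" "\<forall>z\<in>V. \<phi> (\<psi> z) = z" "subspace L" "dim L = m" "\<phi> ` (M \<inter> U) = V \<inter> L"
  proof -
    have "\<forall>p\<in>M. \<exists>U V (\<phi>::'a\<Rightarrow>'a) \<psi> L. open U \<and> p \<in> U \<and> open V \<and>
        smooth_on U \<phi> \<and> smooth_on V \<psi> \<and> \<phi> ` U = V \<and>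
        (\<forall>x\<in>U. \<psi> (\<phi> x) = x) \<and> (\<forall>z\<in>V. \<phi> (\<psi> z) = z) \<and>
        subspace L \<and> dim L = m \<and> \<phi> ` (M \<inter> U) = V \<inter> L"
      using mf unfolding embedded_submanifold_def by (rule conjunct2)
    then have "\<exists>U V (\<phi>::'a\<Rightarrow>'a) \<psi> L. open U \<and> x0 \<in> U \<and> open V \<and>
        smooth_on U \<phi> \<and> smooth_on V \<psi> \<and> \<phi> ` U = V \<and>
        (\<forall>x\<in>U. \<psi> (\<phi> x) = x) \<and> (\<forall>z\<in>V. \<phi> (\<psi> z) = z) \<and>
        subspace L \<and> dim L = m \<and> \<phi> ` (M \<inter> U) = V \<inter> L" using x0 by (rule bspec)
    then show ?thesis
      by (elim exE conjE) (rule that, assumption+)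
  qed
  have C1: "Ck_on (Suc 0) U \<phi>" using ch(4) unfolding smooth_on_def by blast
  have psic: "continuous_on V \<psi>" using ch(5) unfolding smooth_on_def by (metis Ck_on.simps(1))
  obtain e K where eK: "e > 0" "K > 0" "cball x0 e \<subseteq> U"
    "\<And>x y. x \<in> cball x0 e \<Longrightarrow> y \<in> cball x0 e \<Longrightarrow> dist (\<phi> x) (\<phi> y) \<le> K * dist x y"
    using C1_local_lipschitz[OF C1 ch(1) ch(2)] by blast
  define e' where "e' = min e r"
  have e': "e' > 0" using eK r unfolding e'_def by simp
  define T where "T = M \<inter> ball x0 e'"
  have TA: "T \<subseteq> M \<inter> ball x0 r" unfolding T_def e'_def by auto
  have TU: "T \<subseteq> cball x0 e" unfolding T_def e'_def by auto
  define z0 where "z0 = \<phi> x0"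
  have z0V: "z0 \<in> V" and z0L: "z0 \<in> L" using ch(11) x0 ch(2) unfolding z0_def by blast+
  have psiz0: "\<psi> z0 = x0" using ch(7) ch(2) unfolding z0_def by blast
  obtain s1 where s1: "s1 > 0" "ball z0 s1 \<subseteq> V" using ch(3) z0V open_contains_ball by blast
  obtain s2 where s2: "s2 > 0" "\<And>z. z \<in> V \<Longrightarrow> dist z z0 < s2 \<Longrightarrow> dist (\<psi> z) (\<psi> z0) < e'"
    using psic z0V e' unfolding continuous_on_iff by blast
  define s where "s = min s1 s2"
  have s: "s > 0" using s1 s2 unfolding s_def by simp
  have img: "L \<inter> ball z0 s \<subseteq> \<phi> ` T"
  proof
    fix z assume z: "z \<in> L \<inter> ball z0 s"
    then have zV: "z \<in> V" using s1 unfolding s_def by auto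
    then have "z \<in> \<phi> ` (M \<inter> U)" using ch(11) z by blast
    then obtain w where w: "w \<in> M" "w \<in> U" "z = \<phi> w" by blast
    have "\<psi> z = w" using ch(7) w by simp
    moreover have "dist (\<psi> z) x0 < e'" using s2(2)[OF zV] z psiz0 unfolding s_def
      by (auto simp: dist_commute)
    ultimately have "w \<in> T" using w unfolding T_def by (auto simp: dist_commute)
    then show "z \<in> \<phi> ` T" using w by blast
  qed
  obtain b where b: "\<And>i. i<m \<Longrightarrow> b i \<in> L"
    "\<And>i k. i<m \<Longrightarrow> k<m \<Longrightarrow> b i \<bullet> b k = (if i = k then 1 else 0)"
    using orth_frame[OF ch(9) ch(10)] by metis
  have nb: "norm (b i) = 1" if "i < m" for i
    using b(2)[OF that that] by (simp add: norm_eq_sqrt_inner)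
  define G where "G t = restrict (\<lambda>i. \<phi> t \<bullet> b i) {..<m}" for t
  define \<eta> where "\<eta> = s / (real m + 1)"
  have \<eta>: "\<eta> > 0" using s unfolding \<eta>_def by simp
  define l where "l j = z0 \<bullet> b j - \<eta>" for j
  define h where "h j = z0 \<bullet> b j + \<eta>" for j
  show ?thesis
  proof (rule hd_pos[OF TA eK(2), where G=G and l=l and h=h])
    fix a c j assume a: "a \<in> T" and c: "c \<in> T" and j: "j < m"
    have "\<bar>G a j - G c j\<bar> = \<bar>(\<phi> a - \<phi> c) \<bullet> b j\<bar>" using j unfolding G_def by (simp add: inner_diff_left)
    also have "\<dots> \<le> norm (\<phi> a - \<phi> c) * norm (b j)" by (rule Cauchy_Schwarz_ineq2)
    also have "\<dots> = dist (\<phi> a) (\<phi> c)" using nb[OF j] by (simp add: dist_norm)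
    also have "\<dots> \<le> K * dist a c" using eK(4) a c TU by blast
    finally show "\<bar>G a j - G c j\<bar> \<le> K * dist a c" .
  next
    fix j assume "j < m" then show "l j < h j" using \<eta> unfolding l_def h_def by simp
  next
    show "PiE {..<m} (\<lambda>j. {l j..h j}) \<subseteq> G ` T"
    proof
      fix q assume q: "q \<in> PiE {..<m} (\<lambda>j. {l j..h j})"
      define x where "x = z0 + (\<Sum>i<m. (q i - z0 \<bullet> b i) *\<^sub>R b i)"
      have xL: "x \<in> L" unfolding x_def using ch(9) z0L b(1)
        by (intro subspace_add subspace_sum subspace_scale) auto
      have qi: "\<bar>q i - z0 \<bullet> b i\<bar> \<le> \<eta>" if "i < m" for i
      proof -
        have "q i \<in> {l i..h i}" using q that by (auto simp: PiE_iff)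
        then show ?thesis unfolding l_def h_def by (simp add: abs_le_iff)
      qed
      have "norm (x - z0) \<le> (\<Sum>i<m. norm ((q i - z0 \<bullet> b i) *\<^sub>R b i))"
        unfolding x_def by (metis add_diff_cancel_left' norm_sum)
      also have "\<dots> \<le> (\<Sum>i<m. \<eta>)"
        using qi nb by (intro sum_mono) auto
      also have "\<dots> = real m * \<eta>" by simp
      also have "\<dots> < s" unfolding \<eta>_def using s
        by (simp add: field_simps)
      finally have "x \<in> ball z0 s" by (simp add: dist_norm norm_minus_commute)
      with xL img obtain t where t: "t \<in> T" "x = \<phi> t" by blast
      have "x \<bullet> b k = q k" if k: "k < m" for k
      proof -
        have "x \<bullet> b k = z0 \<bullet> b k + (\<Sum>i<m. (q i - z0 \<bullet> b i) * (b i \<bullet> b k))"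
          unfolding x_def by (simp add: inner_add_left inner_sum_left)
        also have "(\<Sum>i<m. (q i - z0 \<bullet> b i) * (b i \<bullet> b k)) = (\<Sum>i<m. if i = k then q i - z0 \<bullet> b i else 0)"
          using b(2) k by (intro sum.cong) auto
        also have "\<dots> = q k - z0 \<bullet> b k" using k by simp
        finally show ?thesis by simp
      qed
      then have "G t = q" using q unfolding G_def t(2)[symmetric]
        by (auto simp: PiE_iff extensional_def)
      then show "q \<in> G ` T" using t by blast
    qed
  qed
qed

lemma Lip_props:
  assumes "C-lipschitz_on X f"
  shows "Lip X f \<le> C" "0 \<le> Lip X f"
proof -
  have bdd: "bdd_below {C. C-lipschitz_on X f}"
    by (rule bdd_belowI[where m=0]) (auto simp: lipschitz_on_def)
  show "Lip X f \<le> C" unfolding Lip_def using assms bdd by (intro cInf_lower) auto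
  show "0 \<le> Lip X f" unfolding Lip_def using assms
    by (intro cInf_greatest) (auto simp: lipschitz_on_def)
qed

lemma Lip_mid:
  fixes u v :: "'a::metric_space \<Rightarrow> 'b::real_normed_vector"
  assumes u: "Cu-lipschitz_on X u" and v: "Cv-lipschitz_on X v"
  shows "Lip X (\<lambda>x. (1/2::real) *\<^sub>R (u x + v x)) \<le> (Lip X u + Lip X v) / 2"
    "((Cu + Cv)/2)-lipschitz_on X (\<lambda>x. (1/2::real) *\<^sub>R (u x + v x))"
proof -
  define w where "w = (\<lambda>x. (1/2::real) *\<^sub>R (u x + v x))"
  have wl: "((C1 + C2)/2)-lipschitz_on X w"
    if l1: "C1-lipschitz_on X u" and l2: "C2-lipschitz_on X v" for C1 C2
  proof -
    have "dist (w a) (w b) \<le> (C1 + C2)/2 * dist a b" if ab: "a \<in> X" "b \<in> X" for a b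
    proof -
      have "w a - w b = (1/2::real) *\<^sub>R ((u a - u b) + (v a - v b))"
        unfolding w_def by (simp add: scaleR_right_distrib scaleR_right_diff_distrib algebra_simps)
      then have "dist (w a) (w b) = norm ((u a - u b) + (v a - v b)) / 2"
        unfolding dist_norm by simp
      also have "\<dots> \<le> (norm (u a - u b) + norm (v a - v b)) / 2"
        by (intro divide_right_mono norm_triangle_ineq) auto
      also have "\<dots> \<le> (C1 * dist a b + C2 * dist a b) / 2"
        using l1 l2 ab by (intro divide_right_mono add_mono) (auto simp: lipschitz_on_def dist_norm)
      finally show ?thesis by (simp add: algebra_simps)
    qed
    then show ?thesis using l1 l2 by (auto simp: lipschitz_on_def)
  qed
  show "((Cu + Cv)/2)-lipschitz_on X (\<lambda>x. (1/2::real) *\<^sub>R (u x + v x))"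
    using wl[OF u v] unfolding w_def .
  have "2 * Lip X w - C2 \<le> Lip X u" if C2: "C2-lipschitz_on X v" for C2
    unfolding Lip_def[of X u] using u
  proof (intro cInf_greatest)
    fix C1 assume "C1 \<in> {C. C-lipschitz_on X u}"
    then have "Lip X w \<le> (C1 + C2)/2" using Lip_props(1)[OF wl[OF _ C2]] by auto
    then show "2 * Lip X w - C2 \<le> C1" by simp
  qed auto
  then have "2 * Lip X w - Lip X u \<le> Lip X v"
    unfolding Lip_def[of X v] using v
    by (intro cInf_greatest) (auto simp: algebra_simps Lip_def[of X u])
  then show "Lip X (\<lambda>x. (1/2::real) *\<^sub>R (u x + v x)) \<le> (Lip X u + Lip X v) / 2"
    unfolding w_def by simp
qed

lemma Vol_space: "space (Vol m M) = M"
  unfolding Vol_def by (simp add: space_measure_of_conv)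

lemma Vol_sets: "sets (Vol m (M::'a::euclidean_space set)) = sets (restrict_space borel M)"
proof -
  have eq: "{M \<inter> B | B. B \<in> sets borel} = (\<inter>) M ` sets (borel :: 'a measure)" by auto
  have sa: "sigma_algebra M ((\<inter>) M ` sets (borel :: 'a measure))"
    using sets.sigma_algebra_axioms[of "restrict_space borel M"]
    by (simp add: sets_restrict_space space_restrict_space)
  have "sets (Vol m M) = sigma_sets M ((\<inter>) M ` sets (borel :: 'a measure))"
    unfolding Vol_def sets_measure_of_conv eq by auto
  also have "\<dots> = (\<inter>) M ` sets borel" using sigma_algebra.sigma_sets_eq[OF sa] .
  finally show ?thesis by (simp add: sets_restrict_space)
qed

lemma Vol_emeasure:
  assumes nz: "(\<integral>\<^sup>+ x. f x \<partial>(Vol m M)) \<noteq> 0" and A: "A \<in> sets (Vol m M)"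
  shows "emeasure (Vol m M) A = hausdorff_measure m A"
proof -
  let ?G = "{M \<inter> B | B. B \<in> sets (borel::'a measure)}"
  have G: "?G \<subseteq> Pow M" by auto
  have ms: "measure_space M (sigma_sets M ?G) (hausdorff_measure m)"
  proof (rule ccontr)
    assume "\<not> ?thesis"
    then have z: "emeasure (Vol m M) B = 0" for B
      unfolding Vol_def emeasure_measure_of_conv by simp
    have "AE x in Vol m M. False"
      by (rule AE_I'[where N="space (Vol m M)"]) (auto simp: null_sets_def z)
    then have "(\<integral>\<^sup>+ x. f x \<partial>(Vol m M)) = (\<integral>\<^sup>+ x. 0 \<partial>(Vol m M))"
      by (intro nn_integral_cong_AE) auto
    then show False using nz by simp
  qed
  have "A \<in> sigma_sets M ?G" using A G unfolding Vol_def sets_measure_of_conv by simp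
  then show ?thesis using ms unfolding Vol_def emeasure_measure_of_conv by simp
qed

lemma sc_half:
  assumes "strictly_convex_on Y f" "a \<in> Y" "b \<in> Y" "a \<noteq> b"
  shows "f ((1/2::real) *\<^sub>R (a + b)) < (f a + f b) / 2"
proof -
  have "\<forall>t::real. a \<noteq> b \<and> 0 < t \<and> t < 1 \<longrightarrow> f ((1 - t) *\<^sub>R a + t *\<^sub>R b) < (1 - t) * f a + t * f b"
    using assms(1-3) unfolding strictly_convex_on_def by blast
  then have "a \<noteq> b \<and> 0 < (1/2::real) \<and> (1/2::real) < 1 \<longrightarrow> f ((1 - 1/2) *\<^sub>R a + (1/2) *\<^sub>R b) < (1 - 1/2) * f a + (1/2) * f b"
    by (rule spec)
  then have "f ((1 - 1/2) *\<^sub>R a + (1/2::real) *\<^sub>R b) < (1 - 1/2) * f a + (1/2) * f b"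
    using assms(4) by simp
  then show ?thesis by (simp add: scaleR_right_distrib)
qed

theorem mainTheorem5:
  fixes M :: "'a::euclidean_space set" and m :: nat
    and Y :: "'b::real_normed_vector set"
    and \<rho> :: "'a \<Rightarrow> real" and y :: "'a \<Rightarrow> 'b" and loss :: "'b \<Rightarrow> 'b \<Rightarrow> real"
    and lam :: real and u v :: "'a \<Rightarrow> 'b"
  defines "X \<equiv> cbox (0::'a) One"
  assumes findim: "\<exists>B::'b set. finite B \<and> span B = UNIV"
    and Y_convex: "convex Y"
    and M_sub: "M \<subseteq> X" and M_compact: "compact M" and M_mfd: "embedded_submanifold m M"
    and rho_meas: "\<rho> \<in> borel_measurable (Vol m M)"
    and rho_prob: "(\<integral>\<^sup>+ x. ennreal (\<rho> x) \<partial>(Vol m M)) = 1"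
    and rho_inf: "\<exists>c>0. \<forall>x\<in>M. c \<le> \<rho> x"
    and y_maps: "y ` X \<subseteq> Y"
    and y_meas: "y \<in> borel_measurable (Vol m M)"
    and l_meas: "(\<lambda>p. loss (fst p) (snd p)) \<in> borel_measurable (restrict_space (borel \<Otimes>\<^sub>M borel) (Y \<times> Y))"
    and l_nonneg: "\<forall>y1\<in>Y. \<forall>y2\<in>Y. loss y1 y2 \<ge> 0"
    and l_zero: "\<forall>y1\<in>Y. \<forall>y2\<in>Y. loss y1 y2 = 0 \<longleftrightarrow> y1 = y2"
    and l_strict: "\<forall>y2\<in>Y. strictly_convex_on Y (\<lambda>y1. loss y1 y2)"
    and lam: "lam > 0"
    and u_min: "is_minimizer (W1inf X Y) (Jfun (Vol m M) loss y \<rho> lam X) u"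
    and v_min: "is_minimizer (W1inf X Y) (Jfun (Vol m M) loss y \<rho> lam X) v"
  shows "\<forall>x\<in>M. u x = v x"
proof (rule ccontr)
  let ?\<mu> = "Vol m M"
  assume "\<not> (\<forall>x\<in>M. u x = v x)"
  then obtain x0 where x0: "x0 \<in> M" "u x0 \<noteq> v x0" by blast
  have uW: "u \<in> W1inf X Y" and Ju: "Jfun ?\<mu> loss y \<rho> lam X u < \<infinity>"
    and umin: "\<And>w. w \<in> W1inf X Y \<Longrightarrow> Jfun ?\<mu> loss y \<rho> lam X u \<le> Jfun ?\<mu> loss y \<rho> lam X w"
    using u_min unfolding is_minimizer_def by auto
  have vW: "v \<in> W1inf X Y" and Jv: "Jfun ?\<mu> loss y \<rho> lam X v < \<infinity>"
    and vmin: "\<And>w. w \<in> W1inf X Y \<Longrightarrow> Jfun ?\<mu> loss y \<rho> lam X v \<le> Jfun ?\<mu> loss y \<rho> lam X w"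
    using v_min unfolding is_minimizer_def by auto
  obtain Cu where Cu: "Cu-lipschitz_on X u" and uY: "u ` X \<subseteq> Y" using uW unfolding W1inf_def by auto
  obtain Cv where Cv: "Cv-lipschitz_on X v" and vY: "v ` X \<subseteq> Y" using vW unfolding W1inf_def by auto
  define w where "w = (\<lambda>x. (1/2::real) *\<^sub>R (u x + v x))"
  have wY: "w ` X \<subseteq> Y"
  proof
    fix z assume "z \<in> w ` X"
    then obtain x where x: "x \<in> X" "z = w x" by blast
    have "(1/2::real) *\<^sub>R u x + (1/2::real) *\<^sub>R v x \<in> Y"
      using uY vY x Y_convex by (intro convexD) auto
    then show "z \<in> Y" using x unfolding w_def by (simp add: scaleR_right_distrib)
  qed
  have wW: "w \<in> W1inf X Y" using wY Lip_mid(2)[OF Cu Cv] unfolding W1inf_def w_def by auto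
  have Lw: "Lip X w \<le> (Lip X u + Lip X v) / 2" using Lip_mid(1)[OF Cu Cv] unfolding w_def .
  have Lu0: "Lip X u \<ge> 0" and Lv0: "Lip X v \<ge> 0" using Lip_props(2) Cu Cv by blast+
  obtain c where c: "c > 0" "\<And>x. x \<in> M \<Longrightarrow> c \<le> \<rho> x" using rho_inf by blast
  have MX: "x \<in> X" if "x \<in> M" for x using M_sub that by blast
  have yY: "y x \<in> Y" if "x \<in> M" for x using y_maps MX[OF that] by blast
  have uYM: "u x \<in> Y" "v x \<in> Y" "w x \<in> Y" if "x \<in> M" for x using uY vY wY MX[OF that] by blast+
  define F where "F f x = loss (f x) (y x) * \<rho> x" for f x
  define g where "g x = (F u x + F v x) / 2 - F w x" for x
  have Fnn: "F f x \<ge> 0" if "x \<in> M" "f x \<in> Y" for f x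
    unfolding F_def using l_nonneg that yY c by (intro mult_nonneg_nonneg) (auto intro: order_trans[OF less_imp_le])
  have g0: "g x \<ge> 0" if x: "x \<in> M" for x
  proof (cases "u x = v x")
    case True
    then have "w x = u x" unfolding w_def by (simp flip: scaleR_2)
    then show ?thesis unfolding g_def F_def using True by simp
  next
    case False
    have "loss (w x) (y x) < (loss (u x) (y x) + loss (v x) (y x)) / 2"
      unfolding w_def using sc_half[where f="\<lambda>y1. loss y1 (y x)", OF _ uYM(1)[OF x] uYM(2)[OF x] False] l_strict yY[OF x]
      by simp
    then have "loss (w x) (y x) * \<rho> x < (loss (u x) (y x) + loss (v x) (y x)) / 2 * \<rho> x"
      using c(1) c(2)[OF x] by (intro mult_strict_right_mono) auto
    then have "F w x < (F u x + F v x) / 2" unfolding F_def by (simp add: field_simps)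
    then show ?thesis unfolding g_def by simp
  qed
  define D0 where "D0 = dist (u x0) (v x0)"
  have D0: "D0 > 0" using x0 unfolding D0_def by simp
  have Cu0: "Cu \<ge> 0" and Cv0: "Cv \<ge> 0" using Cu Cv by (auto simp: lipschitz_on_def)
  define r where "r = D0 / (Cu + Cv + 1)"
  have r: "r > 0" unfolding r_def using D0 Cu0 Cv0 by simp
  define A where "A = M \<inter> ball x0 r"
  have gpos: "g x > 0" if x: "x \<in> A" for x
  proof -
    have xM: "x \<in> M" and dx: "dist x0 x < r" using x unfolding A_def by auto
    have t1: "dist (u x0) (v x0) \<le> dist (u x0) (u x) + dist (u x) (v x0)" by (rule dist_triangle)
    have t2: "dist (u x) (v x0) \<le> dist (u x) (v x) + dist (v x) (v x0)" by (rule dist_triangle)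
    have "D0 \<le> dist (u x0) (u x) + dist (u x) (v x) + dist (v x) (v x0)"
      unfolding D0_def using t1 t2 by linarith
    also have "\<dots> \<le> Cu * dist x0 x + dist (u x) (v x) + Cv * dist x x0"
      using Cu Cv MX[OF xM] MX[OF x0(1)] by (intro add_mono) (auto simp: lipschitz_on_def)
    finally have "D0 \<le> (Cu + Cv) * dist x0 x + dist (u x) (v x)" by (simp add: dist_commute algebra_simps)
    moreover have "(Cu + Cv) * dist x0 x \<le> (Cu + Cv) * r" using dx Cu0 Cv0 by (intro mult_left_mono) auto
    moreover have "(Cu + Cv) * r < D0" unfolding r_def using D0 Cu0 Cv0 by (simp add: field_simps)
    ultimately have "u x \<noteq> v x" by auto
    have "loss (w x) (y x) < (loss (u x) (y x) + loss (v x) (y x)) / 2"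
      unfolding w_def using sc_half[where f="\<lambda>y1. loss y1 (y x)", OF _ uYM(1)[OF xM] uYM(2)[OF xM] \<open>u x \<noteq> v x\<close>] l_strict yY[OF xM]
      by simp
    then have "loss (w x) (y x) * \<rho> x < (loss (u x) (y x) + loss (v x) (y x)) / 2 * \<rho> x"
      using c(1) c(2)[OF xM] by (intro mult_strict_right_mono) auto
    then have "F w x < (F u x + F v x) / 2" unfolding F_def by (simp add: field_simps)
    then show ?thesis unfolding g_def by simp
  qed
  have sp: "space ?\<mu> = M" by (rule Vol_space)
  have cont_meas: "f \<in> borel_measurable ?\<mu>" if "continuous_on M f" for f :: "'a \<Rightarrow> 'b"
    using borel_measurable_continuous_on_restrict[OF that]
    by (subst measurable_cong_sets[OF Vol_sets refl])
  have um: "u \<in> borel_measurable ?\<mu>" and vm: "v \<in> borel_measurable ?\<mu>" and wm: "w \<in> borel_measurable ?\<mu>"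
    using lipschitz_on_continuous_on[OF Cu] lipschitz_on_continuous_on[OF Cv]
      lipschitz_on_continuous_on[OF Lip_mid(2)[OF Cu Cv]] M_sub
    by (auto intro!: cont_meas intro: continuous_on_subset simp: w_def)
  have Fm: "F f \<in> borel_measurable ?\<mu>" if fm: "f \<in> borel_measurable ?\<mu>" and fY: "\<And>x. x \<in> M \<Longrightarrow> f x \<in> Y" for f
  proof -
    have "(\<lambda>x. (f x, y x)) \<in> measurable ?\<mu> (restrict_space (borel \<Otimes>\<^sub>M borel) (Y \<times> Y))"
      using fm y_meas fY yY sp by (intro measurable_restrict_space2 measurable_Pair) auto
    from measurable_compose[OF this l_meas]
    have "(\<lambda>x. loss (f x) (y x)) \<in> borel_measurable ?\<mu>" by simp
    then show ?thesis unfolding F_def using rho_meas by measurable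
  qed
  have Fum: "F u \<in> borel_measurable ?\<mu>" and Fvm: "F v \<in> borel_measurable ?\<mu>"
    by (rule Fm[OF um uYM(1)], assumption) (rule Fm[OF vm uYM(2)], assumption)+
  have Fwm: "F w \<in> borel_measurable ?\<mu>" by (rule Fm[OF wm uYM(3)])
  have gm: "g \<in> borel_measurable ?\<mu>" unfolding g_def using Fum Fvm Fwm by measurable
  define Iu where "Iu = (\<integral>\<^sup>+ x. ennreal (F u x) \<partial>?\<mu>)"
  define Iv where "Iv = (\<integral>\<^sup>+ x. ennreal (F v x) \<partial>?\<mu>)"
  define Iw where "Iw = (\<integral>\<^sup>+ x. ennreal (F w x) \<partial>?\<mu>)"
  define Ig where "Ig = (\<integral>\<^sup>+ x. ennreal (g x) \<partial>?\<mu>)"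
  have "Iu + Iv = (\<integral>\<^sup>+ x. ennreal (F u x) + ennreal (F v x) \<partial>?\<mu>)"
    unfolding Iu_def Iv_def using Fum Fvm by (intro nn_integral_add[symmetric]) auto
  also have "\<dots> = (\<integral>\<^sup>+ x. 2 * ennreal (F w x) + 2 * ennreal (g x) \<partial>?\<mu>)"
  proof (intro nn_integral_cong)
    fix x assume "x \<in> space ?\<mu>"
    then have x: "x \<in> M" using sp by simp
    have "ennreal (F u x) + ennreal (F v x) = ennreal (F u x + F v x)"
      using Fnn x uYM by (simp add: ennreal_plus)
    also have "F u x + F v x = 2 * F w x + 2 * g x" unfolding g_def by simp
    also have "ennreal (2 * F w x + 2 * g x) = 2 * ennreal (F w x) + 2 * ennreal (g x)"
      using Fnn[of x w] g0[OF x] x uYM by (simp add: ennreal_plus ennreal_mult)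
    finally show "ennreal (F u x) + ennreal (F v x) = 2 * ennreal (F w x) + 2 * ennreal (g x)" .
  qed
  also have "\<dots> = 2 * Iw + 2 * Ig"
    unfolding Iw_def Ig_def using Fwm gm
    by (simp add: nn_integral_add nn_integral_cmult)
  finally have E1: "Iu + Iv = 2 * Iw + 2 * Ig" .
  define Lu where "Lu = ennreal (lam * Lip X u)"
  define Lv where "Lv = ennreal (lam * Lip X v)"
  define Lwe where "Lwe = ennreal (lam * Lip X w)"
  have E2: "2 * Lwe \<le> Lu + Lv"
  proof -
    have "2 * Lwe = ennreal (2 * (lam * Lip X w))" unfolding Lwe_def by (subst ennreal_mult') auto
    also have "\<dots> \<le> ennreal (lam * Lip X u + lam * Lip X v)"
      using mult_left_mono[OF _ less_imp_le[OF lam], of "2 * Lip X w" "Lip X u + Lip X v"] Lw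
      by (intro ennreal_leI) (simp add: algebra_simps)
    also have "\<dots> = Lu + Lv" unfolding Lu_def Lv_def using lam Lu0 Lv0 by (simp add: ennreal_plus)
    finally show ?thesis .
  qed
  have JuE: "Jfun ?\<mu> loss y \<rho> lam X u = Iu + Lu" unfolding Jfun_def Iu_def Lu_def F_def ..
  have JvE: "Jfun ?\<mu> loss y \<rho> lam X v = Iv + Lv" unfolding Jfun_def Iv_def Lv_def F_def ..
  have JwE: "Jfun ?\<mu> loss y \<rho> lam X w = Iw + Lwe" unfolding Jfun_def Iw_def Lwe_def F_def ..
  have "Iu + Lu + (Iv + Lv) \<le> 2 * (Iw + Lwe)"
    using add_mono[OF umin[OF wW] vmin[OF wW]] unfolding JuE JvE JwE by (simp only: mult_2)
  also have "\<dots> = 2 * Iw + 2 * Lwe" by (simp add: distrib_left)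
  also have "\<dots> \<le> 2 * Iw + (Lu + Lv)" using E2 by (intro add_left_mono)
  finally have "(2 * Iw + (Lu + Lv)) + 2 * Ig \<le> (2 * Iw + (Lu + Lv)) + 0"
    using E1 by (simp add: ac_simps)
  moreover have "2 * Iw + (Lu + Lv) \<noteq> \<infinity>"
  proof -
    have "Iu \<le> Iu + Lu" by simp
    then have "Iu < \<infinity>" using Ju unfolding JuE by (rule le_less_trans)
    moreover have "Iv \<le> Iv + Lv" by simp
    then have "Iv < \<infinity>" using Jv unfolding JvE by (rule le_less_trans)
    ultimately have "Iu + Iv < \<infinity>" by (simp add: ennreal_add_less_top)
    moreover have "2 * Iw \<le> Iu + Iv" unfolding E1 by simp
    ultimately have "2 * Iw < \<infinity>" by (meson le_less_trans)
    then show ?thesis unfolding Lu_def Lv_def by (simp add: ennreal_add_less_top)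
  qed
  ultimately have "2 * Ig \<le> 0" using ennreal_add_left_cancel_le by blast
  then have "Ig = 0" by simp
  then have "AE x in ?\<mu>. ennreal (g x) = 0" unfolding Ig_def using gm by (subst (asm) nn_integral_0_iff_AE) auto
  then have "AE x in ?\<mu>. x \<notin> A"
    by (rule AE_mp) (auto intro!: AE_I2 dest: gpos)
  moreover have Asets: "A \<in> sets ?\<mu>"
    unfolding A_def Vol_sets by (auto simp: sets_restrict_space)
  ultimately have "emeasure ?\<mu> A = 0"
    by (subst (asm) AE_iff_measurable[where N=A]) (auto simp: sp A_def)
  moreover have "emeasure ?\<mu> A = hausdorff_measure m A"
    using rho_prob by (intro Vol_emeasure[OF _ Asets, where f="\<lambda>x. ennreal (\<rho> x)"]) simp
  moreover have "hausdorff_measure m A > 0"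
    unfolding A_def by (rule manifold_pos[OF M_mfd x0(1) r])
  ultimately show False by simp
qed

end
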